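(* Let $\psi\in\mathcal L$ be well-formed, let $\tau$ be a trace, and let $\sigma=\mathsf{seq}_\psi(\tau)$. Then $\sigma\models\psi$ in the propositional sense if and only if $\tau\models\psi$.
   Context: Syntax. Fix a multi-sorted signature with a finite non-empty set $V$ of data variables, each $v\in V$ having a lookback variable $\overleftarrow v$. Terms are $t::=v\mid\overleftarrow v\mid f(t_1,\dots,t_k)$; atoms are $p(t_1,\dots,t_k)$. First-order formulas are $\phi::=\top\mid\bot\mid a\mid\neg a\mid\phi\wedge\phi\mid\phi\vee\phi$. Properties are $\psi::=\phi\mid\psi\wedge\psi\mid\psi\vee\psi\mid\mathsf X\psi\mid\mathsf X_{\mathsf w}\psi\mid\psi\mathsf U\psi\mid\psi\mathsf R\psi$, forming $\mathcal L$; $\mathit{foa}(\psi)$ is the set of atoms of $\psi$. Semantics. A trace is $\tau=(M,\langle\alpha_0,\dots,\alpha_{n-1}\rangle)$ with $M$ a structure and $\alpha_i$ assignments on $V$. A term is well-defined at $i$ if $0<i<n$, or $i=0$ and it has no lookback variable. $v$ evaluates to $\alpha_i(v)$ and $\overleftarrow v$ to $\alpha_{i-1}(v)$. - $\tau,i\models p(t_1,\dots,t_k)$ iff some $t_j$ is not well-defined at $i$, or the evaluated tuple is in $p^M$; $\tau,i\models\neg a$ iff $\tau,i\not\models a$. - $\wedge$ and $\vee$ are as usual. - $\mathsf X\psi$: $i<n-1$ and $\psi$ holds at $i+1$. - $\mathsf X_{\mathsf w}\psi$: $i=n-1$ or $\psi$ holds at $i+1$. - $\psi_1\mathsf U\psi_2$: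 some $j\in[i,n)$ has $\psi_2$, with $\psi_1$ on $[i,j)$. - $\psi_1\mathsf R\psi_2$: $\psi_2$ holds on $[i,n)$, or some $j\in[i,n)$ has $\psi_1$ with $\psi_2$ on $[i,j]$. $\tau\models\psi$ iff $\tau,0\models\psi$. A sequence of atom sets $\sigma=\langle A_0,\dots,A_{n-1}\rangle$ satisfies $\psi$ in the propositional sense if the same clauses hold when each atom $a$ is treated as a Boolean proposition true at instant $i$ iff $a\in A_i$. For assignments $\alpha,\alpha'$ on $V$, $\alpha\rhd\alpha'$ maps $\overleftarrow v\mapsto\alpha(v)$ and $v\mapsto\alpha'(v)$. Corresponding atom sequence. $\mathsf{seq}_\psi(\tau)=\langle A_0,\dots,A_{n-1}\rangle$ with: - $A_0=\{a\in\mathit{foa}(\psi)\mid a$ has no lookback variable and $M,\alpha_0\models a\}$; - $A_i=\{a\in\mathit{foa}(\psi)\mid M,\alpha_{i-1}\rhd\alpha_i\models a\}$ for $0<i<n$. Well-formedness. - $\mathit{last}$ is a dedicated proposition for the last instant. - $\mathsf{tnps}(\psi)=\{\psi\}$ for (negated) atoms and temporally-rooted $\psi$, and $\mathsf{tnps}(\psi_1\wedge\psi_2)=\mathsf{tnps}(\psi_1\vee\psi_2)=\mathsf{tnps}(\psi_1)\cup\mathsf{tnps}(\psi_2)$. - $\mathsf{xnf}$ fixes literals, $\top$, $\bot$ and $\mathsf X$/$\mathsf X_{\mathsf w}$-rooted properties, commutes with $\wedge$ and $\vee$, and satisfies $\mathsf{xnf}(\psi_1\mathsf U\psi_2)=\mathsf{xnf}(\psi_2)\vee(\mathsf{xnf}(\psi_1)\wedge\mathsf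 X(\psi_1\mathsf U\psi_2))$ and $\mathsf{xnf}(\psi_1\mathsf R\psi_2)=(\mathsf{xnf}(\psi_2)\vee\mathit{last})\wedge(\mathsf{xnf}(\psi_1)\vee\mathsf X_{\mathsf w}(\psi_1\mathsf R\psi_2))$. - $\psi$ is well-formed if no (negated) atom in $\mathsf{tnps}(\mathsf{xnf}(\psi))$ contains a lookback variable. *)

theory Defs
  imports Main
begin

text \<open>Variables occurring in terms: a data variable v or its lookback variable.\<close>
datatype 'v tvar = Cur 'v | Prev 'v

datatype ('f, 'v) trm = TV "'v tvar" | Fn 'f "('f, 'v) trm list"

datatype ('p, 'f, 'v) atom = Atom 'p "('f, 'v) trm list"

text \<open>Properties of the language L (first-order formulas are the temporal-free ones).\<close>
datatype ('p, 'f, 'v) ltl =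
    PTrue
  | PFalse
  | Lit "('p, 'f, 'v) atom"
  | NLit "('p, 'f, 'v) atom"
  | PAnd "('p, 'f, 'v) ltl" "('p, 'f, 'v) ltl"
  | POr "('p, 'f, 'v) ltl" "('p, 'f, 'v) ltl"
  | X "('p, 'f, 'v) ltl"
  | WX "('p, 'f, 'v) ltl"
  | U "('p, 'f, 'v) ltl" "('p, 'f, 'v) ltl"
  | R "('p, 'f, 'v) ltl" "('p, 'f, 'v) ltl"

fun trm_has_lb :: "('f, 'v) trm \<Rightarrow> bool" where
  "trm_has_lb (TV (Cur v)) = False"
| "trm_has_lb (TV (Prev v)) = True"
| "trm_has_lb (Fn f ts) = (\<exists>t\<in>set ts. trm_has_lb t)"

fun atom_has_lb :: "('p, 'f, 'v) atom \<Rightarrow> bool" where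
  "atom_has_lb (Atom p ts) = (\<exists>t\<in>set ts. trm_has_lb t)"

fun foa :: "('p, 'f, 'v) ltl \<Rightarrow> ('p, 'f, 'v) atom set" where
  "foa PTrue = {}"
| "foa PFalse = {}"
| "foa (Lit a) = {a}"
| "foa (NLit a) = {a}"
| "foa (PAnd a b) = foa a \<union> foa b"
| "foa (POr a b) = foa a \<union> foa b"
| "foa (X a) = foa a"
| "foa (WX a) = foa a"
| "foa (U a b) = foa a \<union> foa b"
| "foa (R a b) = foa a \<union> foa b"

text \<open>sat n L i \<psi>: satisfaction at instant i on a trace of length n,
  where L i a says whether atom a is true at instant i.
  Both the first-order and the propositional semantics are instances.\<close>
fun sat :: "nat \<Rightarrow> (nat \<Rightarrow> ('p, 'f, 'v) atom \<Rightarrow> bool) \<Rightarrow> nat \<Rightarrow> ('p, 'f, 'v) ltl \<Rightarrow> bool" where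
  "sat n L i PTrue = True"
| "sat n L i PFalse = False"
| "sat n L i (Lit a) = L i a"
| "sat n L i (NLit a) = (\<not> L i a)"
| "sat n L i (PAnd a b) = (sat n L i a \<and> sat n L i b)"
| "sat n L i (POr a b) = (sat n L i a \<or> sat n L i b)"
| "sat n L i (X a) = (i < n - 1 \<and> sat n L (i + 1) a)"
| "sat n L i (WX a) = (i = n - 1 \<or> sat n L (i + 1) a)"
| "sat n L i (U a b) =
     (\<exists>j. i \<le> j \<and> j < n \<and> sat n L j b \<and> (\<forall>k. i \<le> k \<and> k < j \<longrightarrow> sat n L k a))"
| "sat n L i (R a b) =
     ((\<forall>j. i \<le> j \<and> j < n \<longrightarrow> sat n L j b) \<or>
      (\<exists>j. i \<le> j \<and> j < n \<and> sat n L j a \<and> (\<forall>k. i \<le> k \<and> k \<le> j \<longrightarrow> sat n L k b)))"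

record ('f, 'p, 'd) fo_struct =
  fint :: "'f \<Rightarrow> 'd list \<Rightarrow> 'd"
  pint :: "'p \<Rightarrow> 'd list \<Rightarrow> bool"

fun eval :: "('f, 'p, 'd) fo_struct \<Rightarrow> ('v tvar \<Rightarrow> 'd) \<Rightarrow> ('f, 'v) trm \<Rightarrow> 'd" where
  "eval M \<beta> (TV x) = \<beta> x"
| "eval M \<beta> (Fn f ts) = fint M f (map (eval M \<beta>) ts)"

fun fo_atom_sat :: "('f, 'p, 'd) fo_struct \<Rightarrow> ('v tvar \<Rightarrow> 'd) \<Rightarrow> ('p, 'f, 'v) atom \<Rightarrow> bool" where
  "fo_atom_sat M \<beta> (Atom p ts) = pint M p (map (eval M \<beta>) ts)"

definition cur_only :: "('v \<Rightarrow> 'd) \<Rightarrow> ('v tvar \<Rightarrow> 'd)" where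
  "cur_only \<alpha> = (\<lambda>x. case x of Cur v \<Rightarrow> \<alpha> v | Prev v \<Rightarrow> undefined)"

definition rhd :: "('v \<Rightarrow> 'd) \<Rightarrow> ('v \<Rightarrow> 'd) \<Rightarrow> ('v tvar \<Rightarrow> 'd)" where
  "rhd \<alpha> \<alpha>' = (\<lambda>x. case x of Prev v \<Rightarrow> \<alpha> v | Cur v \<Rightarrow> \<alpha>' v)"

text \<open>A trace is a structure M together with the list of assignments.\<close>
definition trace_asg :: "('v \<Rightarrow> 'd) list \<Rightarrow> nat \<Rightarrow> ('v tvar \<Rightarrow> 'd)" where
  "trace_asg \<alpha>s i = (if i = 0 then cur_only (\<alpha>s ! 0) else rhd (\<alpha>s ! (i - 1)) (\<alpha>s ! i))"

definition well_defined :: "nat \<Rightarrow> nat \<Rightarrow> ('f, 'v) trm \<Rightarrow> bool" where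
  "well_defined n i t = ((0 < i \<and> i < n) \<or> (i = 0 \<and> \<not> trm_has_lb t))"

fun trace_atom :: "('f, 'p, 'd) fo_struct \<Rightarrow> ('v \<Rightarrow> 'd) list \<Rightarrow> nat \<Rightarrow> ('p, 'f, 'v) atom \<Rightarrow> bool" where
  "trace_atom M \<alpha>s i (Atom p ts) =
     ((\<exists>t\<in>set ts. \<not> well_defined (length \<alpha>s) i t)
      \<or> pint M p (map (eval M (trace_asg \<alpha>s i)) ts))"

definition trace_sat :: "('f, 'p, 'd) fo_struct \<Rightarrow> ('v \<Rightarrow> 'd) list \<Rightarrow> ('p, 'f, 'v) ltl \<Rightarrow> bool" where
  "trace_sat M \<alpha>s \<psi> = sat (length \<alpha>s) (trace_atom M \<alpha>s) 0 \<psi>"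

definition prop_sat :: "('p, 'f, 'v) atom set list \<Rightarrow> ('p, 'f, 'v) ltl \<Rightarrow> bool" where
  "prop_sat \<sigma> \<psi> = sat (length \<sigma>) (\<lambda>i a. a \<in> \<sigma> ! i) 0 \<psi>"

definition seq :: "('p, 'f, 'v) ltl \<Rightarrow> ('f, 'p, 'd) fo_struct \<Rightarrow> ('v \<Rightarrow> 'd) list \<Rightarrow> ('p, 'f, 'v) atom set list" where
  "seq \<psi> M \<alpha>s = map (\<lambda>i.
      if i = 0 then {a \<in> foa \<psi>. \<not> atom_has_lb a \<and> fo_atom_sat M (cur_only (\<alpha>s ! 0)) a}
      else {a \<in> foa \<psi>. fo_atom_sat M (rhd (\<alpha>s ! (i - 1)) (\<alpha>s ! i)) a})
    [0..<length \<alpha>s]"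

text \<open>Output of xnf: properties combined with \<and>, \<or>, and the dedicated proposition last.\<close>
datatype 'a xf = XLast | XP 'a | XAnd "'a xf" "'a xf" | XOr "'a xf" "'a xf"

fun tnps :: "('p, 'f, 'v) ltl \<Rightarrow> ('p, 'f, 'v) ltl set" where
  "tnps (PAnd a b) = tnps a \<union> tnps b"
| "tnps (POr a b) = tnps a \<union> tnps b"
| "tnps PTrue = {}"
| "tnps PFalse = {}"
| "tnps \<psi> = {\<psi>}"

fun tnps_x :: "('p, 'f, 'v) ltl xf \<Rightarrow> ('p, 'f, 'v) ltl set" where
  "tnps_x XLast = {}"
| "tnps_x (XP \<psi>) = tnps \<psi>"
| "tnps_x (XAnd a b) = tnps_x a \<union> tnps_x b"
| "tnps_x (XOr a b) = tnps_x a \<union> tnps_x b"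

fun xnf :: "('p, 'f, 'v) ltl \<Rightarrow> ('p, 'f, 'v) ltl xf" where
  "xnf PTrue = XP PTrue"
| "xnf PFalse = XP PFalse"
| "xnf (Lit a) = XP (Lit a)"
| "xnf (NLit a) = XP (NLit a)"
| "xnf (X a) = XP (X a)"
| "xnf (WX a) = XP (WX a)"
| "xnf (PAnd a b) = XAnd (xnf a) (xnf b)"
| "xnf (POr a b) = XOr (xnf a) (xnf b)"
| "xnf (U a b) = XOr (xnf b) (XAnd (xnf a) (XP (X (U a b))))"
| "xnf (R a b) = XAnd (XOr (xnf b) XLast) (XOr (xnf a) (XP (WX (R a b))))"

definition well_formed :: "('p, 'f, 'v) ltl \<Rightarrow> bool" where
  "well_formed \<psi> = (\<forall>\<chi>\<in>tnps_x (xnf \<psi>). \<forall>a. (\<chi> = Lit a \<or> \<chi> = NLit a) \<longrightarrow> \<not> atom_has_lb a)"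

end

theory Submission
  imports Defs
begin

lemma sat_cong:
  "(\<forall>j a. i0 \<le> j \<and> j < n \<and> a \<in> foa \<phi> \<longrightarrow> L1 j a = L2 j a) \<Longrightarrow> i0 \<le> i \<Longrightarrow> i < n
   \<Longrightarrow> sat n L1 i \<phi> = sat n L2 i \<phi>"
proof (induction \<phi> arbitrary: i)
  case (X \<phi>)
  then show ?case by (cases "i < n - 1") auto
next
  case (WX \<phi>)
  then show ?case by (cases "i = n - 1") auto
next
  case (U \<phi>1 \<phi>2)
  have e1: "\<And>k. i \<le> k \<Longrightarrow> k < n \<Longrightarrow> sat n L1 k \<phi>1 = sat n L2 k \<phi>1"
    using U by simp
  have e2: "\<And>k. i \<le> k \<Longrightarrow> k < n \<Longrightarrow> sat n L1 k \<phi>2 = sat n L2 k \<phi>2"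
    using U by simp
  show ?case apply simp using e1 e2 by (metis order.strict_trans)
next
  case (R \<phi>1 \<phi>2)
  have e1: "\<And>k. i \<le> k \<Longrightarrow> k < n \<Longrightarrow> sat n L1 k \<phi>1 = sat n L2 k \<phi>1"
    using R by simp
  have e2: "\<And>k. i \<le> k \<Longrightarrow> k < n \<Longrightarrow> sat n L1 k \<phi>2 = sat n L2 k \<phi>2"
    using R by simp
  show ?case apply simp using e1 e2 by (metis le_less_trans)
qed auto

lemma U_unfold: "i < n \<Longrightarrow> sat n L i (U a b) = (sat n L i b \<or> (sat n L i a \<and> sat n L i (X (U a b))))"
proof
  assume i: "i < n" and "sat n L i (U a b)"
  then obtain j where j: "i \<le> j" "j < n" "sat n L j b" "\<forall>k. i \<le> k \<and> k < j \<longrightarrow> sat n L k a" by auto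
  show "sat n L i b \<or> (sat n L i a \<and> sat n L i (X (U a b)))"
  proof (cases "j = i")
    case True then show ?thesis using j by simp
  next
    case False
    then have "i < j" using j by simp
    then show ?thesis using j by (auto intro!: exI[of _ j])
  qed
next
  assume i: "i < n" and h: "sat n L i b \<or> (sat n L i a \<and> sat n L i (X (U a b)))"
  show "sat n L i (U a b)"
  proof (cases "sat n L i b")
    case True then show ?thesis using i by (auto intro!: exI[of _ i])
  next
    case False
    then have a: "sat n L i a" and "i < n - 1" and "\<exists>j. i + 1 \<le> j \<and> j < n \<and> sat n L j b \<and> (\<forall>k. i + 1 \<le> k \<and> k < j \<longrightarrow> sat n L k a)"
      using h by auto
    then obtain j where j: "i + 1 \<le> j" "j < n" "sat n L j b" "\<forall>k. i + 1 \<le> k \<and> k < j \<longrightarrow> sat n L k a" by blast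
    have "\<forall>k. i \<le> k \<and> k < j \<longrightarrow> sat n L k a"
      using j(4) a by (metis Suc_eq_plus1 Suc_leI le_eq_less_or_eq)
    then show ?thesis using j by (auto intro!: exI[of _ j])
  qed
qed

lemma R_unfold: "i < n \<Longrightarrow> sat n L i (R a b) = (sat n L i b \<and> (sat n L i a \<or> sat n L i (WX (R a b))))"
proof
  assume i: "i < n" and h: "sat n L i (R a b)"
  have b: "sat n L i b" using h i by auto
  show "sat n L i b \<and> (sat n L i a \<or> sat n L i (WX (R a b)))"
  proof (cases "i = n - 1")
    case True then show ?thesis using b by simp
  next
    case False
    then have i1: "i + 1 < n" using i by simp
    from h consider "\<forall>j. i \<le> j \<and> j < n \<longrightarrow> sat n L j b"
      | j where "i \<le> j" "j < n" "sat n L j a" "\<forall>k. i \<le> k \<and> k \<le> j \<longrightarrow> sat n L k b" by auto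
    then show ?thesis
    proof cases
      case 1 then show ?thesis using b by auto
    next
      case (2 j)
      show ?thesis
      proof (cases "j = i")
        case True then show ?thesis using 2 b by simp
      next
        case False
        then have "i + 1 \<le> j" using 2 by simp
        then show ?thesis using 2 b by (auto intro!: exI[of _ j])
      qed
    qed
  qed
next
  assume i: "i < n" and h: "sat n L i b \<and> (sat n L i a \<or> sat n L i (WX (R a b)))"
  show "sat n L i (R a b)"
  proof (cases "sat n L i a")
    case True then show ?thesis using h i by (auto intro!: exI[of _ i])
  next
    case False
    then have w: "sat n L i (WX (R a b))" and b: "sat n L i b" using h by auto
    show ?thesis
    proof (cases "i = n - 1")
      case True
      then have "\<forall>j. i \<le> j \<and> j < n \<longrightarrow> sat n L j b" using b i by (metis Suc_pred' le_antisym less_Suc_eq_le less_nat_zero_code not_gr_zero)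
      then show ?thesis by simp
    next
      case False
      then have w': "sat n L (i + 1) (R a b)" using w by simp
      from w' consider "\<forall>j. i + 1 \<le> j \<and> j < n \<longrightarrow> sat n L j b"
        | j where "i + 1 \<le> j" "j < n" "sat n L j a" "\<forall>k. i + 1 \<le> k \<and> k \<le> j \<longrightarrow> sat n L k b" by auto
      then show ?thesis
      proof cases
        case 1
        then have "\<forall>j. i \<le> j \<and> j < n \<longrightarrow> sat n L j b" using b by (metis Suc_eq_plus1 Suc_leI le_eq_less_or_eq)
        then show ?thesis by simp
      next
        case (2 j)
        then have "\<forall>k. i \<le> k \<and> k \<le> j \<longrightarrow> sat n L k b" using b by (metis Suc_eq_plus1 Suc_leI le_eq_less_or_eq)
        then show ?thesis using 2 by (auto intro!: exI[of _ j])
      qed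
    qed
  qed
qed

lemma sat0:
  "(\<forall>\<chi>\<in>tnps_x (xnf \<phi>). \<forall>a. (\<chi> = Lit a \<or> \<chi> = NLit a) \<longrightarrow> \<not> atom_has_lb a) \<Longrightarrow>
   0 < n \<Longrightarrow>
   (\<forall>j a. 1 \<le> j \<and> j < n \<and> a \<in> foa \<phi> \<longrightarrow> L1 j a = L2 j a) \<Longrightarrow>
   (\<forall>a. a \<in> foa \<phi> \<and> \<not> atom_has_lb a \<longrightarrow> L1 0 a = L2 0 a) \<Longrightarrow>
   sat n L1 0 \<phi> = sat n L2 0 \<phi>"
proof (induction \<phi>)
  case (X \<phi>)
  then show ?case using sat_cong[of 1 n \<phi> L1 L2 1] by auto
next
  case (WX \<phi>)
  then show ?case using sat_cong[of 1 n \<phi> L1 L2 1] by (cases "0 = n - 1") auto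
next
  case (U \<phi>1 \<phi>2)
  have ih1: "sat n L1 0 \<phi>1 = sat n L2 0 \<phi>1" using U by auto
  have ih2: "sat n L1 0 \<phi>2 = sat n L2 0 \<phi>2" using U by auto
  have x: "sat n L1 0 (X (U \<phi>1 \<phi>2)) = sat n L2 0 (X (U \<phi>1 \<phi>2))"
    using U.prems sat_cong[of 1 n "U \<phi>1 \<phi>2" L1 L2 1] by auto
  show ?case using U_unfold[OF U.prems(2), of L1] U_unfold[OF U.prems(2), of L2] ih1 ih2 x by simp
next
  case (R \<phi>1 \<phi>2)
  have ih1: "sat n L1 0 \<phi>1 = sat n L2 0 \<phi>1" using R by auto
  have ih2: "sat n L1 0 \<phi>2 = sat n L2 0 \<phi>2" using R by auto
  have x: "sat n L1 0 (WX (R \<phi>1 \<phi>2)) = sat n L2 0 (WX (R \<phi>1 \<phi>2))"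
    using R.prems sat_cong[of 1 n "R \<phi>1 \<phi>2" L1 L2 1] by (cases "0 = n - 1") auto
  show ?case using R_unfold[OF R.prems(2), of L1] R_unfold[OF R.prems(2), of L2] ih1 ih2 x by simp
qed auto

theorem lemma5:
  fixes \<psi> :: "('p, 'f, 'v :: finite) ltl"
    and M :: "('f, 'p, 'd) fo_struct"
    and \<alpha>s :: "('v \<Rightarrow> 'd) list"
  assumes "well_formed \<psi>"
    and "\<alpha>s \<noteq> []"
  shows "prop_sat (seq \<psi> M \<alpha>s) \<psi> \<longleftrightarrow> trace_sat M \<alpha>s \<psi>"
proof -
  let ?n = "length \<alpha>s"
  have len: "length (seq \<psi> M \<alpha>s) = ?n" by (simp add: seq_def)
  have A: "\<forall>j a. 1 \<le> j \<and> j < ?n \<and> a \<in> foa \<psi> \<longrightarrow> (a \<in> seq \<psi> M \<alpha>s ! j) = trace_atom M \<alpha>s j a"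
  proof (intro allI impI)
    fix j a assume h: "1 \<le> j \<and> j < ?n \<and> a \<in> foa \<psi>"
    obtain p ts where a: "a = Atom p ts" by (cases a)
    show "(a \<in> seq \<psi> M \<alpha>s ! j) = trace_atom M \<alpha>s j a"
      using h by (simp add: a seq_def well_defined_def trace_asg_def)
  qed
  have B: "\<forall>a. a \<in> foa \<psi> \<and> \<not> atom_has_lb a \<longrightarrow> (a \<in> seq \<psi> M \<alpha>s ! 0) = trace_atom M \<alpha>s 0 a"
  proof (intro allI impI)
    fix a assume h: "a \<in> foa \<psi> \<and> \<not> atom_has_lb a"
    obtain p ts where a: "a = Atom p ts" by (cases a)
    show "(a \<in> seq \<psi> M \<alpha>s ! 0) = trace_atom M \<alpha>s 0 a"
      using h assms(2) by (simp add: a seq_def well_defined_def trace_asg_def)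
  qed
  show ?thesis
    unfolding prop_sat_def trace_sat_def len
    apply (rule sat0)
    using assms A B by (auto simp: well_formed_def)
qed

end
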